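(* Let $A$ be an $n\times n$ Hermitian matrix ($n\ge2$) with eigenvalues $\lambda_1\ge\dots\ge\lambda_n$, and for $k=1,\dots,n$ let $\mu_{k,1}\ge\dots\ge\mu_{k,n-1}$ be the eigenvalues of $A_k$. Then for all $1\le\ell\le r\le n-1$, $$(r-\ell+1)\lambda_\ell+(n-1)\sum_{j=\ell}^r\lambda_{j+1}\le\sum_{k=1}^n\sum_{j=\ell}^r\mu_{k,j}\le(n-1)\sum_{j=\ell}^r\lambda_j+(r-\ell+1)\lambda_{r+1}.$$
   Context: For an $n\times n$ matrix $A$ and $k\in\{1,\dots,n\}$, $A_k$ denotes the $(n-1)\times(n-1)$ principal submatrix obtained by deleting the $k$-th row and $k$-th column of $A$. *)

theory Defs
  imports Complex_Main "Jordan_Normal_Form.Char_Poly" "Jordan_Normal_Form.Determinant"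
begin

definition hermitian_mat :: "nat \<Rightarrow> complex mat \<Rightarrow> bool" where
  "hermitian_mat n A \<longleftrightarrow> A \<in> carrier_mat n n \<and>
     (\<forall>i<n. \<forall>j<n. A $$ (i, j) = cnj (A $$ (j, i)))"

definition sorted_eigenvalues :: "nat \<Rightarrow> complex mat \<Rightarrow> (nat \<Rightarrow> real) \<Rightarrow> bool" where
  "sorted_eigenvalues m B lam \<longleftrightarrow> B \<in> carrier_mat m m \<and>
     (\<forall>i j. 1 \<le> i \<and> i \<le> j \<and> j \<le> m \<longrightarrow> lam j \<le> lam i) \<and>
     char_poly B = (\<Prod>i=1..m. [:- complex_of_real (lam i), 1:])"

end

theory Submission
  imports Defs
begin


definition adj :: "complex mat \<Rightarrow> complex mat" where
  "adj M = mat (dim_col M) (dim_row M) (\<lambda>(i,j). cnj (M $$ (j,i)))"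

lemma adj_dim[simp]: "dim_row (adj M) = dim_col M" "dim_col (adj M) = dim_row M"
  unfolding adj_def by auto

lemma adj_carrier[simp]: "M \<in> carrier_mat n m \<Longrightarrow> adj M \<in> carrier_mat m n"
  unfolding adj_def by auto

lemma adj_index[simp]: "i < dim_col M \<Longrightarrow> j < dim_row M \<Longrightarrow> adj M $$ (i,j) = cnj (M $$ (j,i))"
  unfolding adj_def by auto

lemma adj_adj[simp]: "adj (adj M) = M"
  by (rule eq_matI, auto)

lemma adj_mult: assumes "A \<in> carrier_mat n k" "B \<in> carrier_mat k m"
  shows "adj (A * B) = adj B * adj A"
  by (rule eq_matI, insert assms, auto simp: scalar_prod_def cnj_sum mult.commute)

lemma adj_one[simp]: "adj (1\<^sub>m n) = 1\<^sub>m n"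
  by (rule eq_matI, auto)

definition diagc :: "nat \<Rightarrow> (nat \<Rightarrow> complex) \<Rightarrow> complex mat" where
  "diagc n f = mat n n (\<lambda>(i,j). if i = j then f i else 0)"

lemma diagc_carrier[simp]: "diagc n f \<in> carrier_mat n n"
  unfolding diagc_def by auto

lemma diagc_dim[simp]: "dim_row (diagc n f) = n" "dim_col (diagc n f) = n"
  unfolding diagc_def by auto

lemma diagc_index[simp]: "i < n \<Longrightarrow> j < n \<Longrightarrow> diagc n f $$ (i,j) = (if i = j then f i else 0)"
  unfolding diagc_def by auto

definition orthonormal :: "complex vec list \<Rightarrow> bool" where
  "orthonormal vs \<longleftrightarrow> (\<forall>i<length vs. \<forall>j<length vs. vs ! i \<bullet>c vs ! j = (if i = j then 1 else 0))"

lemma exists_orth_vec: fixes ks :: "complex vec list"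
  assumes ks: "set ks \<subseteq> carrier_vec d" and len: "length ks < d"
  shows "\<exists>v. v \<in> carrier_vec d \<and> v \<noteq> 0\<^sub>v d \<and> (\<forall>k\<in>set ks. k \<bullet> v = 0)"
proof -
  define M where "M = mat\<^sub>r d d (\<lambda>i. if i = d - 1 then 0\<^sub>v d else if i < length ks then ks ! i else 0\<^sub>v d)"
  have M: "M \<in> carrier_mat d d" unfolding M_def by auto
  have "det M = 0" unfolding M_def
    by (rule det_row_0, insert len ks, auto simp: nth_mem subsetD)
  from this[unfolded det_0_iff_vec_prod_zero_field[OF M]] obtain v where
    v: "v \<in> carrier_vec d" "v \<noteq> 0\<^sub>v d" "M *\<^sub>v v = 0\<^sub>v d" by auto
  have "\<forall>k\<in>set ks. k \<bullet> v = 0"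
  proof
    fix k assume "k \<in> set ks"
    then obtain i where i: "i < length ks" "k = ks ! i" by (auto simp: in_set_conv_nth)
    have "(M *\<^sub>v v) $ i = 0" using v(3) i len by auto
    moreover have "(M *\<^sub>v v) $ i = row M i \<bullet> v" using i len M by auto
    moreover have "row M i = k" unfolding M_def using i len ks
      by (subst row_mat_of_row_fun, auto simp: nth_mem subsetD carrier_vecD)
    ultimately show "k \<bullet> v = 0" by simp
  qed
  thus ?thesis using v by auto
qed

lemma cscalar_self: fixes v :: "complex vec"
  shows "v \<bullet>c v = of_real (\<Sum>i<dim_vec v. (cmod (v $ i))^2)"
  unfolding scalar_prod_def of_real_sum lessThan_atLeast0
  by (rule sum.cong, auto, metis complex_norm_square of_real_power)

lemma cscalar_self_pos: fixes v :: "complex vec"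
  assumes "v \<in> carrier_vec d" "v \<noteq> 0\<^sub>v d"
  shows "(\<Sum>i<dim_vec v. (cmod (v $ i))^2) > 0"
proof -
  from assms obtain i where i: "i < d" "v $ i \<noteq> 0" by (metis carrier_vecD eq_vecI index_zero_vec(1,2))
  have "(\<Sum>i<dim_vec v. (cmod (v $ i))^2) \<ge> (cmod (v $ i))^2"
    by (rule member_le_sum, insert i assms, auto)
  moreover have "(cmod (v $ i))^2 > 0" using i by auto
  ultimately show ?thesis by linarith
qed

lemma cscalar_swap: fixes v w :: "complex vec"
  assumes "v \<in> carrier_vec d" "w \<in> carrier_vec d"
  shows "w \<bullet>c v = cnj (v \<bullet>c w)"
  using assms unfolding scalar_prod_def by (auto simp: cnj_sum mult.commute)

lemma orthonormal_extend:
  fixes ks vs :: "complex vec list"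
  assumes "set ks \<subseteq> carrier_vec d" "set vs \<subseteq> carrier_vec d" "orthonormal vs"
    "\<forall>k\<in>set ks. \<forall>v\<in>set vs. k \<bullet> v = 0" "length ks + length vs + t \<le> d"
  shows "\<exists>ws. set ws \<subseteq> carrier_vec d \<and> orthonormal ws \<and> length ws = length vs + t \<and>
     take (length vs) ws = vs \<and> (\<forall>k\<in>set ks. \<forall>w\<in>set ws. k \<bullet> w = 0)"
  using assms
proof (induction t arbitrary: vs)
  case 0
  then show ?case by auto
next
  case (Suc t)
  let ?ks = "ks @ map conjugate vs"
  have "set ?ks \<subseteq> carrier_vec d" using Suc.prems by auto
  moreover have "length ?ks < d" using Suc.prems by auto
  ultimately obtain v where v: "v \<in> carrier_vec d" "v \<noteq> 0\<^sub>v d" "\<forall>k\<in>set ?ks. k \<bullet> v = 0"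
    using exists_orth_vec by blast
  define S where "S = (\<Sum>i<dim_vec v. (cmod (v $ i))^2)"
  have S: "S > 0" unfolding S_def by (rule cscalar_self_pos[OF v(1,2)])
  define y where "y = complex_of_real (1 / sqrt S) \<cdot>\<^sub>v v"
  have y: "y \<in> carrier_vec d" unfolding y_def using v by auto
  have yy: "y \<bullet>c y = 1"
  proof -
    have "y \<bullet>c y = complex_of_real (1 / sqrt S) * cnj (complex_of_real (1 / sqrt S)) * (v \<bullet>c v)"
      unfolding y_def using v(1) by (simp add: scalar_prod_def sum_distrib_left algebra_simps)
    also have "v \<bullet>c v = of_real S" unfolding S_def by (rule cscalar_self)
    finally show ?thesis using S by (simp add: field_simps flip: of_real_mult) 
  qed
  have ky: "\<forall>k\<in>set ?ks. k \<bullet> y = 0"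
  proof
    fix k assume k: "k \<in> set ?ks"
    then have "k \<in> carrier_vec d" using Suc.prems by auto
    then show "k \<bullet> y = 0" unfolding y_def using v k by (simp add: scalar_prod_smult_distrib[OF _ v(1)])
  qed
  define vs' where "vs' = vs @ [y]"
  have on: "orthonormal vs'"
    unfolding orthonormal_def
  proof (intro allI impI)
    fix i j assume i: "i < length vs'" and j: "j < length vs'"
    have vy: "a < length vs \<Longrightarrow> y \<bullet>c vs ! a = 0" for a
    proof -
      assume a: "a < length vs"
      then have va: "vs ! a \<in> carrier_vec d" using Suc.prems(2) nth_mem by blast
      have "conjugate (vs ! a) \<bullet> y = 0" using ky a by auto
      then show "y \<bullet>c vs ! a = 0" using comm_scalar_prod[OF carrier_vec_conjugate[OF va] y] by simp
    qed
    have yv: "a < length vs \<Longrightarrow> vs ! a \<bullet>c y = 0" for a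
      using cscalar_swap[OF y, of "vs ! a"] vy[of a] Suc.prems(2) nth_mem by fastforce
    show "vs' ! i \<bullet>c vs' ! j = (if i = j then 1 else 0)"
      using i j Suc.prems(3) vy yv yy unfolding vs'_def orthonormal_def
      by (cases "i < length vs"; cases "j < length vs"; auto simp: nth_append)
  qed
  have "set vs' \<subseteq> carrier_vec d" "\<forall>k\<in>set ks. \<forall>v\<in>set vs'. k \<bullet> v = 0"
    "length ks + length vs' + t \<le> d"
    using Suc.prems y ky unfolding vs'_def by auto
  from Suc.IH[OF Suc.prems(1) this(1) on this(2) this(3)] obtain ws where
    ws: "set ws \<subseteq> carrier_vec d" "orthonormal ws" "length ws = length vs' + t"
      "take (length vs') ws = vs'" "\<forall>k\<in>set ks. \<forall>w\<in>set ws. k \<bullet> w = 0" by blast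
  have "take (length vs) ws = vs"
  proof -
    have "take (length vs) ws = take (length vs) (take (length vs') ws)"
      unfolding vs'_def by (simp add: min_def)
    also have "\<dots> = vs" using ws(4) unfolding vs'_def by simp
    finally show ?thesis .
  qed
  then show ?case using ws unfolding vs'_def by auto
qed



lemma orthonormal_cols:
  assumes "set ws \<subseteq> carrier_vec d" "orthonormal ws"
  shows "adj (mat_of_cols d ws) * mat_of_cols d ws = 1\<^sub>m (length ws)"
proof (rule eq_matI)
  fix i j assume i: "i < dim_row (1\<^sub>m (length ws))" and j: "j < dim_col (1\<^sub>m (length ws))"
  have wi: "ws ! i \<in> carrier_vec d" "ws ! j \<in> carrier_vec d" using assms i j by auto
  have "(adj (mat_of_cols d ws) * mat_of_cols d ws) $$ (i,j) = (\<Sum>t<d. cnj (ws ! i $ t) * ws ! j $ t)"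
    using i j wi by (simp add: scalar_prod_def mat_of_cols_index lessThan_atLeast0)
  also have "\<dots> = ws ! j \<bullet>c ws ! i"
    using wi by (simp add: scalar_prod_def lessThan_atLeast0 mult.commute)
  also have "\<dots> = 1\<^sub>m (length ws) $$ (i,j)" using assms(2) i j unfolding orthonormal_def by auto
  finally show "(adj (mat_of_cols d ws) * mat_of_cols d ws) $$ (i,j) = 1\<^sub>m (length ws) $$ (i,j)" .
qed auto

lemma unit_scale: fixes v :: "complex vec"
  assumes "v \<in> carrier_vec d" "v \<noteq> 0\<^sub>v d"
  shows "\<exists>c. c \<noteq> 0 \<and> (c \<cdot>\<^sub>v v) \<bullet>c (c \<cdot>\<^sub>v v) = 1"
proof -
  define S where "S = (\<Sum>i<dim_vec v. (cmod (v $ i))^2)"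
  have S: "S > 0" unfolding S_def by (rule cscalar_self_pos[OF assms])
  define c where "c = complex_of_real (1 / sqrt S)"
  have "(c \<cdot>\<^sub>v v) \<bullet>c (c \<cdot>\<^sub>v v) = c * cnj c * (v \<bullet>c v)"
    using assms(1) by (simp add: scalar_prod_def sum_distrib_left algebra_simps)
  also have "v \<bullet>c v = of_real S" unfolding S_def by (rule cscalar_self)
  finally have "(c \<cdot>\<^sub>v v) \<bullet>c (c \<cdot>\<^sub>v v) = 1" unfolding c_def using S by (simp add: field_simps flip: of_real_mult)
  moreover have "c \<noteq> 0" unfolding c_def using S by simp
  ultimately show ?thesis by blast
qed

lemma unitary_right: assumes "U \<in> carrier_mat n n" "adj U * U = 1\<^sub>m n"
  shows "U * adj U = 1\<^sub>m n"
  by (rule mat_mult_left_right_inverse[OF _ assms(1) assms(2)], insert assms(1), auto)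

lemma hermitian_adj: assumes "A \<in> carrier_mat n n"
  shows "adj A = A \<longleftrightarrow> (\<forall>i<n. \<forall>j<n. A $$ (i,j) = cnj (A $$ (j,i)))"
proof
  assume "adj A = A"
  show "\<forall>i<n. \<forall>j<n. A $$ (i,j) = cnj (A $$ (j,i))"
  proof (intro allI impI)
    fix i j assume "i < n" "j < n"
    then have "adj A $$ (i,j) = cnj (A $$ (j,i))" using assms by auto
    then show "A $$ (i,j) = cnj (A $$ (j,i))" using \<open>adj A = A\<close> by simp
  qed
next
  assume h: "\<forall>i<n. \<forall>j<n. A $$ (i,j) = cnj (A $$ (j,i))"
  show "adj A = A"
  proof (rule eq_matI)
    fix i j assume "i < dim_row A" "j < dim_col A"
    then have "i < n" "j < n" using assms by auto
    then show "adj A $$ (i,j) = A $$ (i,j)" using assms h[rule_format, of i j] by simp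
  qed (insert assms, auto)
qed

lemma spectral:
  fixes A :: "complex mat"
  assumes "A \<in> carrier_mat n n" "adj A = A" "char_poly A = (\<Prod>e\<leftarrow>es. [:-e,1:])" "length es = n"
  shows "\<exists>U \<in> carrier_mat n n. adj U * U = 1\<^sub>m n \<and> adj U * A * U = diagc n (\<lambda>i. es ! i)"
  using assms
proof (induction es arbitrary: n A)
  case Nil
  then have n: "n = 0" by simp
  show ?case
    by (rule bexI[of _ "1\<^sub>m 0"], insert Nil n, auto intro!: eq_matI)
next
  case (Cons e es)
  then obtain n' where n: "n = Suc n'" by (cases n, auto)
  have A: "A \<in> carrier_mat n n" using Cons by auto
  have "poly (char_poly A) e = 0" using Cons.prems(3) by simp
  then have "eigenvalue A e" using eigenvalue_root_char_poly[OF A] by simp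
  then obtain v where v: "v \<in> carrier_vec n" "v \<noteq> 0\<^sub>v n" "A *\<^sub>v v = e \<cdot>\<^sub>v v"
    unfolding eigenvalue_def eigenvector_def using A by auto
  obtain c where c: "c \<noteq> 0" "(c \<cdot>\<^sub>v v) \<bullet>c (c \<cdot>\<^sub>v v) = 1" using unit_scale[OF v(1,2)] by auto
  define u where "u = c \<cdot>\<^sub>v v"
  have u: "u \<in> carrier_vec n" "u \<bullet>c u = 1" using v c unfolding u_def by auto
  have Au: "A *\<^sub>v u = e \<cdot>\<^sub>v u"
  proof -
    have "A *\<^sub>v u = c \<cdot>\<^sub>v (e \<cdot>\<^sub>v v)" unfolding u_def using mult_mat_vec[OF A v(1)] v(3) by simp
    also have "\<dots> = e \<cdot>\<^sub>v u" unfolding u_def by (simp add: smult_smult_assoc mult.commute)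
    finally show ?thesis .
  qed
  have on1: "orthonormal [u]" using u unfolding orthonormal_def by auto
  obtain ws where ws: "set ws \<subseteq> carrier_vec n" "orthonormal ws" "length ws = n" "take 1 ws = [u]"
    using orthonormal_extend[of "[]" n "[u]" n'] u on1 n by auto
  have ws0: "ws ! 0 = u" using ws(4) n ws(3) by (cases ws, auto)
  define W where "W = mat_of_cols n ws"
  have W: "W \<in> carrier_mat n n" unfolding W_def using ws(3) by auto
  have adjW[simp]: "adj W \<in> carrier_mat n n" using W by simp
  note assocn = assoc_mult_mat[of _ n n _ n _ n] mult_carrier_mat[of _ n n _ n]
  have WW: "adj W * W = 1\<^sub>m n" unfolding W_def using orthonormal_cols[OF ws(1,2)] ws(3) by simp
  have WW': "W * adj W = 1\<^sub>m n" by (rule unitary_right[OF W WW])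
  have colW0: "col W 0 = u" unfolding W_def using ws ws0 n by (subst col_mat_of_cols, auto)
  define A' where "A' = adj W * A * W"
  have A': "A' \<in> carrier_mat n n" unfolding A'_def using W A by auto
  have adjA': "adj A' = A'"
  proof -
    have "adj A' = adj (adj W * (A * W))" unfolding A'_def using W A by (simp add: assocn)
    also have "\<dots> = adj (A * W) * adj (adj W)" by (rule adj_mult[of _ n n _ n], insert A W, auto)
    also have "\<dots> = (adj W * adj A) * W" by (subst adj_mult[of _ n n _ n], insert A W, auto)
    finally show ?thesis unfolding A'_def using Cons.prems(2) by simp
  qed
  have col0: "A' $$ (i,0) = (if i = 0 then e else 0)" if i: "i < n" for i
  proof -
    have "col (A * W) 0 = A *\<^sub>v col W 0" by (rule col_mult2[OF A W], insert n, simp)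
    also have "\<dots> = e \<cdot>\<^sub>v col W 0" using colW0 Au by simp
    finally have cAW: "col (A * W) 0 = e \<cdot>\<^sub>v col W 0" .
    have "A' $$ (i,0) = (adj W * (A * W)) $$ (i,0)" unfolding A'_def using A W by (simp add: assocn)
    also have "\<dots> = row (adj W) i \<bullet> col (A * W) 0" using i n A W by simp
    also have "\<dots> = e * (row (adj W) i \<bullet> col W 0)" unfolding cAW using W i
      by (simp add: scalar_prod_smult_distrib[of _ n])
    also have "row (adj W) i \<bullet> col W 0 = (adj W * W) $$ (i,0)" using i n W by simp
    also have "\<dots> = (if i = 0 then 1 else 0)" unfolding WW using i n by simp
    finally show ?thesis by simp
  qed
  have row0: "A' $$ (0,j) = (if j = 0 then e else 0)" if j: "j < n" for j
  proof -
    have h: "\<forall>i<n. \<forall>j<n. A' $$ (i,j) = cnj (A' $$ (j,i))" using adjA' unfolding hermitian_adj[OF A'] .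
    have "A' $$ (0,j) = cnj (A' $$ (j,0))" using h[rule_format, of 0 j] j n by simp
    then show ?thesis using col0[OF j] col0[of 0] n by (cases "j = 0", auto)
  qed
  define A3 where "A3 = mat n' n' (\<lambda>(i,j). A' $$ (Suc i, Suc j))"
  have A3: "A3 \<in> carrier_mat n' n'" unfolding A3_def by auto
  define E where "E = mat 1 1 (\<lambda>_. e)"
  have E: "E \<in> carrier_mat 1 1" unfolding E_def by auto
  have blk: "A' = four_block_mat E (0\<^sub>m 1 n') (0\<^sub>m n' 1) A3"
  proof (rule eq_matI)
    fix i j assume i: "i < dim_row (four_block_mat E (0\<^sub>m 1 n') (0\<^sub>m n' 1) A3)"
      and j: "j < dim_col (four_block_mat E (0\<^sub>m 1 n') (0\<^sub>m n' 1) A3)"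
    then have i': "i < n" and j': "j < n" using E A3 n by auto
    show "A' $$ (i,j) = four_block_mat E (0\<^sub>m 1 n') (0\<^sub>m n' 1) A3 $$ (i,j)"
      using i j E A3 n col0[OF i'] row0[OF j']
      by (cases i; cases j; auto simp: E_def A3_def)
  qed (insert A' E A3 n, auto)
  have adjA3: "adj A3 = A3"
    unfolding hermitian_adj[OF A3]
  proof (intro allI impI)
    fix i j assume "i < n'" "j < n'"
    note ij = this
    have h: "\<forall>i<n. \<forall>j<n. A' $$ (i,j) = cnj (A' $$ (j,i))" using adjA' unfolding hermitian_adj[OF A'] .
    show "A3 $$ (i,j) = cnj (A3 $$ (j,i))" using h[rule_format, of "Suc i" "Suc j"] n ij unfolding A3_def by simp
  qed
  have sim: "similar_mat A A'"
  proof (rule similar_matI[of A A' W "adj W" n])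
    show "{A, A', W, adj W} \<subseteq> carrier_mat n n" using A A' W by auto
    show "W * adj W = 1\<^sub>m n" by (rule WW')
    show "adj W * W = 1\<^sub>m n" by (rule WW)
    have "W * A' * adj W = (W * adj W) * A * (W * adj W)" unfolding A'_def using A W by (simp add: assocn)
    then show "A = W * A' * adj W" unfolding WW' using A by simp
  qed
  have cpE: "char_poly E = [:-e,1:]"
  proof -
    have "upper_triangular E" unfolding upper_triangular_def E_def by auto
    from char_poly_upper_triangular[OF E this] show ?thesis unfolding E_def diag_mat_def by simp
  qed
  have "char_poly A = char_poly A'" by (rule char_poly_similar[OF sim])
  also have "\<dots> = char_poly E * char_poly A3" unfolding blk
    by (rule char_poly_four_block_zeros_col[OF E _ A3], auto)
  finally have "[:-e,1:] * char_poly A3 = [:-e,1:] * (\<Prod>e\<leftarrow>es. [:-e,1:])"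
    using Cons.prems(3) cpE by simp
  moreover have "[:-e,1:] \<noteq> (0 :: complex poly)" by simp
  ultimately have cpA3: "char_poly A3 = (\<Prod>e\<leftarrow>es. [:-e,1:])" using mult_left_cancel by blast
  from Cons.IH[OF A3 adjA3 cpA3] Cons.prems(4) n obtain U3 where
    U3: "U3 \<in> carrier_mat n' n'" "adj U3 * U3 = 1\<^sub>m n'" "adj U3 * A3 * U3 = diagc n' (\<lambda>i. es ! i)" by auto
  define V where "V = four_block_mat (1\<^sub>m 1) (0\<^sub>m 1 n') (0\<^sub>m n' 1) U3"
  have V: "V \<in> carrier_mat n n" unfolding V_def using U3 n by auto
  have adjV: "adj V = four_block_mat (1\<^sub>m 1) (0\<^sub>m 1 n') (0\<^sub>m n' 1) (adj U3)"
    by (rule eq_matI, insert U3 n, auto simp: V_def)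
  define U where "U = W * V"
  have U: "U \<in> carrier_mat n n" unfolding U_def using W V by auto
  have adjV'[simp]: "adj V \<in> carrier_mat n n" using V by simp
  have adjU: "adj U = adj V * adj W" unfolding U_def by (rule adj_mult[OF W V])
  have "adj U * U = adj V * (adj W * W) * V" unfolding adjU unfolding U_def using W V by (simp add: assocn)
  also have "\<dots> = adj V * V" unfolding WW using V by simp
  also have "\<dots> = four_block_mat (1\<^sub>m 1) (0\<^sub>m 1 n') (0\<^sub>m n' 1) (adj U3 * U3)"
    unfolding adjV unfolding V_def using U3 by (subst mult_four_block_mat[of _ 1 1 _ n' _ n' _ _ 1 _ n'], auto)
  also have "\<dots> = 1\<^sub>m n" unfolding U3(2) n by (rule eq_matI, auto)
  finally have UU: "adj U * U = 1\<^sub>m n" .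
  have [simp]: "adj U3 * A3 \<in> carrier_mat n' n'" "adj U3 * A3 * U3 \<in> carrier_mat n' n'" using U3 A3 by auto
  have "adj U * A * U = adj V * A' * V" unfolding adjU unfolding U_def A'_def using W V A by (simp add: assocn)
  also have "\<dots> = four_block_mat E (0\<^sub>m 1 n') (0\<^sub>m n' 1) (adj U3 * A3 * U3)"
    unfolding adjV unfolding V_def blk using U3(1) E A3
    by (subst mult_four_block_mat[of _ 1 1 _ n' _ n' _ _ 1 _ n'], auto,
        subst mult_four_block_mat[of _ 1 1 _ n' _ n' _ _ 1 _ n'], auto)
  also have "\<dots> = diagc n (\<lambda>i. (e # es) ! i)" unfolding U3(3) n
    by (rule eq_matI, auto simp: E_def)
  finally show ?case using U UU by blast
qed



lemma mul_index: assumes "X \<in> carrier_mat a b" "Y \<in> carrier_mat b c" "i < a" "j < c"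
  shows "(X * Y) $$ (i,j) = (\<Sum>t<b. X $$ (i,t) * Y $$ (t,j))"
  using assms by (simp add: scalar_prod_def lessThan_atLeast0)

lemma adjmul_index: assumes "X \<in> carrier_mat d q" "Y \<in> carrier_mat d q'" "a < q" "b < q'"
  shows "(adj X * Y) $$ (a,b) = (\<Sum>i<d. cnj (X $$ (i,a)) * Y $$ (i,b))"
  using assms by (simp add: scalar_prod_def lessThan_atLeast0)

lemma muladj_index: assumes "X \<in> carrier_mat d q" "Y \<in> carrier_mat d' q" "i < d" "t < d'"
  shows "(X * adj Y) $$ (i,t) = (\<Sum>a<q. X $$ (i,a) * cnj (Y $$ (t,a)))"
  using assms by (simp add: scalar_prod_def lessThan_atLeast0)

lemma cnj_mult_self: "cnj z * z = complex_of_real ((cmod z)^2)"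
  by (subst complex_norm_square, simp add: mult.commute)

lemma sqz1: "z * cnj z = (complex_of_real (cmod z))^2"
  by (metis complex_norm_square of_real_power)

lemma sqz2: "cnj z * z = (complex_of_real (cmod z))^2"
  by (metis sqz1 mult.commute)

lemma col_sumsq: assumes X: "X \<in> carrier_mat d q" and XX: "adj X * X = 1\<^sub>m q" and a: "a < q"
  shows "(\<Sum>i<d. (cmod (X $$ (i,a)))^2) = 1"
proof -
  have "complex_of_real (\<Sum>i<d. (cmod (X $$ (i,a)))^2) = (\<Sum>i<d. cnj (X $$ (i,a)) * X $$ (i,a))"
    by (simp add: cnj_mult_self)
  also have "\<dots> = (adj X * X) $$ (a,a)" using adjmul_index[OF X X a a] by simp
  also have "\<dots> = 1" using XX a by simp
  finally show ?thesis using of_real_eq_1_iff by blast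
qed

lemma total_sumsq: assumes X: "X \<in> carrier_mat d q" and XX: "adj X * X = 1\<^sub>m q"
  shows "(\<Sum>i<d. \<Sum>a<q. (cmod (X $$ (i,a)))^2) = real q"
proof -
  have "(\<Sum>i<d. \<Sum>a<q. (cmod (X $$ (i,a)))^2) = (\<Sum>a<q. \<Sum>i<d. (cmod (X $$ (i,a)))^2)"
    by (rule sum.swap)
  also have "\<dots> = (\<Sum>a<q. 1)" using col_sumsq[OF X XX] by simp
  finally show ?thesis by simp
qed

lemma rownorm_le1: assumes X: "X \<in> carrier_mat d q" and XX: "adj X * X = 1\<^sub>m q" and j: "j < d"
  shows "(\<Sum>a<q. (cmod (X $$ (j,a)))^2) \<le> 1"
proof -
  define P where "P = X * adj X"
  have P: "P \<in> carrier_mat d d" unfolding P_def using X by auto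
  have PP: "P * P = P"
  proof -
    have aX: "adj X \<in> carrier_mat q d" using X by simp
    have XaX: "X * adj X \<in> carrier_mat d d" using X aX by simp
    have "P * P = X * (adj X * (X * adj X))" unfolding P_def by (rule assoc_mult_mat[OF X aX XaX])
    also have "adj X * (X * adj X) = adj X * X * adj X" by (rule assoc_mult_mat[OF aX X aX, symmetric])
    also have "X * (adj X * X * adj X) = P" unfolding XX P_def using X aX by simp
    finally show ?thesis .
  qed
  define s where "s = (\<Sum>a<q. (cmod (X $$ (j,a)))^2)"
  have Pjt: "P $$ (j,t) = (\<Sum>a<q. X $$ (j,a) * cnj (X $$ (t,a)))" if "t < d" for t
    unfolding P_def using muladj_index[OF X X j that] .
  have Ptj: "P $$ (t,j) = cnj (P $$ (j,t))" if "t < d" for t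
    unfolding Pjt[OF that] unfolding P_def using muladj_index[OF X X that j]
    by (simp add: cnj_sum mult.commute)
  have Pjj: "P $$ (j,j) = complex_of_real s"
    unfolding Pjt[OF j] s_def of_real_sum by (rule sum.cong, auto simp: sqz1 sqz2)
  have "complex_of_real s = (P * P) $$ (j,j)" unfolding PP Pjj ..
  also have "\<dots> = (\<Sum>t<d. P $$ (j,t) * P $$ (t,j))" by (rule mul_index[OF P P j j])
  also have "\<dots> = (\<Sum>t<d. complex_of_real ((cmod (P $$ (j,t)))^2))"
    by (rule sum.cong, auto simp: Ptj sqz1 sqz2)
  finally have "s = (\<Sum>t<d. (cmod (P $$ (j,t)))^2)" unfolding of_real_sum[symmetric] using of_real_eq_iff by blast
  also have "\<dots> \<ge> (cmod (P $$ (j,j)))^2" by (rule member_le_sum, insert j, auto)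
  finally have "s \<ge> s^2" unfolding Pjj by simp
  moreover have "s \<ge> 0" unfolding s_def by (auto intro: sum_nonneg)
  ultimately have "s \<le> 1"
  proof -
    assume a: "s\<^sup>2 \<le> s" "0 \<le> s"
    show "s \<le> 1"
    proof (rule ccontr)
      assume "\<not> s \<le> 1"
      then have "s * 1 < s * s" by (intro mult_strict_left_mono, auto)
      then show False using a by (simp add: power2_eq_square)
    qed
  qed
  then show ?thesis unfolding s_def .
qed

lemma assoc_auto: fixes A B C :: "complex mat" shows "dim_col A = dim_row B \<Longrightarrow> dim_col B = dim_row C \<Longrightarrow> A * B * C = A * (B * C)"
  by (rule assoc_mult_mat[of A "dim_row A" "dim_col A" B "dim_col B" C "dim_col C"], auto)

lemma cancel_assoc: fixes A B X :: "complex mat" shows "A * B = 1\<^sub>m k \<Longrightarrow> dim_col A = dim_row B \<Longrightarrow> dim_col B = dim_row X \<Longrightarrow> A * (B * X) = X"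
proof -
  assume AB: "A * B = 1\<^sub>m k" and d: "dim_col A = dim_row B" "dim_col B = dim_row X"
  have "A * (B * X) = A * B * X" by (rule assoc_auto[symmetric], insert d, auto)
  also have "\<dots> = X"
  proof -
    have "dim_col (A * B) = k" unfolding AB by simp
    then have "dim_row X = k" using d by simp
    then have "X \<in> carrier_mat k (dim_col X)" by auto
    then show ?thesis unfolding AB by (rule left_mult_one_mat)
  qed
  finally show ?thesis .
qed

lemma helper_q: "cnj c * complex_of_real f * c = complex_of_real (f * (cmod c)^2)"
proof -
  have "cnj c * complex_of_real f * c = complex_of_real f * (cnj c * c)" by (simp add: ac_simps)
  also have "\<dots> = complex_of_real f * (complex_of_real (cmod c))^2" by (simp only: sqz2)
  finally show ?thesis by simp
qed

lemma quad_diag: assumes C: "C \<in> carrier_mat p m" and a: "a < m"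
  shows "(adj C * diagc p (\<lambda>j. complex_of_real (f j)) * C) $$ (a,a) = complex_of_real (\<Sum>j<p. f j * (cmod (C $$ (j,a)))^2)"
proof -
  let ?D = "diagc p (\<lambda>j. complex_of_real (f j))"
  have aCD: "adj C * ?D \<in> carrier_mat m p" using C by auto
  have e1: "(adj C * ?D) $$ (a,t) = cnj (C $$ (t,a)) * complex_of_real (f t)" if t: "t < p" for t
  proof -
    have "(adj C * ?D) $$ (a,t) = (\<Sum>j<p. cnj (C $$ (j,a)) * ?D $$ (j,t))"
      by (rule adjmul_index[OF C _ a t], auto)
    also have "\<dots> = (\<Sum>j<p. if j = t then cnj (C $$ (j,a)) * complex_of_real (f j) else 0)"
      by (rule sum.cong, insert t, auto)
    also have "\<dots> = cnj (C $$ (t,a)) * complex_of_real (f t)" using t by simp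
    finally show ?thesis .
  qed
  have "(adj C * ?D * C) $$ (a,a) = (\<Sum>t<p. (adj C * ?D) $$ (a,t) * C $$ (t,a))"
    by (rule mul_index[OF aCD C a a])
  also have "\<dots> = (\<Sum>t<p. complex_of_real (f t * (cmod (C $$ (t,a)))^2))"
    by (rule sum.cong, auto simp: e1 helper_q)
  finally show ?thesis by (simp add: of_real_sum)
qed

lemma core:
  fixes lam mu :: "nat \<Rightarrow> real"
  assumes U: "U \<in> carrier_mat n n" "adj U * U = 1\<^sub>m n" "adj U * A * U = diagc n (\<lambda>i. of_real (lam i))"
  and A: "A \<in> carrier_mat n n"
  and Z: "Z \<in> carrier_mat n p" "adj Z * Z = 1\<^sub>m p" "adj Z * A * Z = diagc p (\<lambda>j. of_real (mu j))"
  and kk: "kk < n" "\<forall>j<p. Z $$ (kk,j) = 0"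
  and Jc: "Jc \<subseteq> {..<p}" and Ic: "Ic \<subseteq> {..<n}" and card: "card Jc + card Ic + m \<le> p"
  shows "\<exists>s q. (\<forall>j<p. 0 \<le> s j \<and> s j \<le> 1) \<and> (\<forall>j\<in>Jc. s j = 0) \<and> (\<Sum>j<p. s j) = real m \<and>
     (\<forall>i<n. 0 \<le> q i \<and> q i + (cmod (U $$ (kk,i)))^2 \<le> 1) \<and> (\<forall>i\<in>Ic. q i = 0) \<and> (\<Sum>i<n. q i) = real m \<and>
     (\<Sum>j<p. mu j * s j) = (\<Sum>i<n. lam i * q i)"
proof -
  have UU': "U * adj U = 1\<^sub>m n" by (rule unitary_right[OF U(1,2)])
  have dims[simp]: "dim_row U = n" "dim_col U = n" "dim_row A = n" "dim_col A = n" "dim_row Z = n" "dim_col Z = p"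
    using U A Z by auto
  define D where "D = diagc n (\<lambda>i. complex_of_real (lam i))"
  have AD: "A = U * (D * adj U)"
  proof -
    have "U * (D * adj U) = U * (adj U * (A * (U * adj U)))" unfolding D_def U(3)[symmetric]
      by (simp add: assoc_auto)
    also have "\<dots> = A" unfolding UU' using A by (simp add: cancel_assoc[OF UU'])
    finally show ?thesis ..
  qed
  define Y where "Y = adj U * Z"
  have Y: "Y \<in> carrier_mat n p" unfolding Y_def by (rule mult_carrier_mat[OF adj_carrier[OF U(1)] Z(1)])
  define ks where "ks = map (unit_vec p) (sorted_list_of_set Jc) @ map (row Y) (sorted_list_of_set Ic)"
  have finJ: "finite Jc" using finite_subset[OF Jc finite_lessThan] .
  have finI: "finite Ic" using finite_subset[OF Ic finite_lessThan] .
  have ksc: "set ks \<subseteq> carrier_vec p" unfolding ks_def using Y by auto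
  have ksl: "length ks = card Jc + card Ic" unfolding ks_def by simp
  obtain ws where ws: "set ws \<subseteq> carrier_vec p" "orthonormal ws" "length ws = m"
    "\<forall>k\<in>set ks. \<forall>w\<in>set ws. k \<bullet> w = 0"
    using orthonormal_extend[OF ksc, of "[]" m] card ksl unfolding orthonormal_def by auto
  define C where "C = mat_of_cols p ws"
  have C: "C \<in> carrier_mat p m" unfolding C_def using ws by auto
  have CC: "adj C * C = 1\<^sub>m m" unfolding C_def using orthonormal_cols[OF ws(1,2)] ws(3) by simp
  have colC: "col C a = ws ! a" if "a < m" for a
    unfolding C_def using that ws by (subst col_mat_of_cols, auto)
  have wsa: "ws ! a \<in> set ws" "ws ! a \<in> carrier_vec p" if "a < m" for a using that ws by auto
  have Czero: "C $$ (j,a) = 0" if j: "j \<in> Jc" and a: "a < m" for j a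
  proof -
    have jp: "j < p" using j Jc by auto
    have "unit_vec p j \<in> set ks" unfolding ks_def using j finJ by auto
    then have "unit_vec p j \<bullet> ws ! a = 0" using ws(4) wsa[OF a] by auto
    moreover have "unit_vec p j \<bullet> ws ! a = ws ! a $ j" using wsa(2)[OF a] jp by simp
    moreover have "C $$ (j,a) = ws ! a $ j" unfolding C_def using jp a ws(3) by (simp add: mat_of_cols_index)
    ultimately show ?thesis by simp
  qed
  define G where "G = Y * C"
  have G: "G \<in> carrier_mat n m" unfolding G_def by (rule mult_carrier_mat[OF Y C])
  have Gzero: "G $$ (i,a) = 0" if i: "i \<in> Ic" and a: "a < m" for i a
  proof -
    have ip: "i < n" using i Ic by auto
    have "row Y i \<in> set ks" unfolding ks_def using i finI by auto
    then have "row Y i \<bullet> ws ! a = 0" using ws(4) wsa[OF a] by auto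
    moreover have "G $$ (i,a) = row Y i \<bullet> col C a" unfolding G_def using ip a Y C by simp
    ultimately show ?thesis using colC[OF a] by simp
  qed
  define s where "s j = (\<Sum>a<m. (cmod (C $$ (j,a)))^2)" for j
  define q where "q i = (\<Sum>a<m. (cmod (G $$ (i,a)))^2)" for i
  have dims2[simp]: "dim_row C = p" "dim_col C = m" "dim_row G = n" "dim_col G = m" "dim_row Y = n" "dim_col Y = p"
    using C G Y by auto
  have adjG: "adj G = adj C * (adj Z * U)"
    unfolding G_def adj_mult[OF Y C] unfolding Y_def adj_mult[OF adj_carrier[OF U(1)] Z(1)] by simp
  have GG: "adj G * G = 1\<^sub>m m"
  proof -
    have "adj G * G = adj C * (adj Z * (U * (adj U * (Z * C))))" unfolding adjG unfolding G_def Y_def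
      by (simp add: assoc_auto)
    also have "\<dots> = 1\<^sub>m m" by (simp add: cancel_assoc[OF UU'] cancel_assoc[OF Z(2)] CC)
    finally show ?thesis .
  qed
  have UG: "U * G = Z * C" unfolding G_def Y_def by (simp add: assoc_auto cancel_assoc[OF UU'])
  have ZCk: "(Z * C) $$ (kk,a) = 0" if a: "a < m" for a
    using mul_index[OF Z(1) C kk(1) a] kk(2) by simp
  have key: "adj C * diagc p (\<lambda>j. of_real (mu j)) * C = adj G * D * G"
  proof -
    have "adj G * D * G = adj C * (adj Z * (U * (D * (adj U * (Z * C)))))"
      unfolding adjG unfolding G_def Y_def by (simp add: assoc_auto D_def)
    also have "\<dots> = adj C * (adj Z * A * Z) * C" unfolding AD by (simp add: assoc_auto D_def)
    finally show ?thesis unfolding Z(3) ..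
  qed
  have sumeq: "(\<Sum>j<p. mu j * s j) = (\<Sum>i<n. lam i * q i)"
  proof -
    have e: "(\<Sum>j<p. mu j * (cmod (C $$ (j,a)))^2) = (\<Sum>i<n. lam i * (cmod (G $$ (i,a)))^2)" if a: "a < m" for a
    proof -
      have "complex_of_real (\<Sum>j<p. mu j * (cmod (C $$ (j,a)))^2) = (adj C * diagc p (\<lambda>j. of_real (mu j)) * C) $$ (a,a)"
        by (rule quad_diag[OF C a, symmetric])
      also have "\<dots> = (adj G * D * G) $$ (a,a)" unfolding key ..
      also have "\<dots> = complex_of_real (\<Sum>i<n. lam i * (cmod (G $$ (i,a)))^2)" unfolding D_def by (rule quad_diag[OF G a])
      finally show ?thesis using of_real_eq_iff by blast
    qed
    have "(\<Sum>j<p. mu j * s j) = (\<Sum>a<m. \<Sum>j<p. mu j * (cmod (C $$ (j,a)))^2)"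
      unfolding s_def by (simp add: sum_distrib_left sum.swap[of _ "{..<p}"])
    also have "\<dots> = (\<Sum>a<m. \<Sum>i<n. lam i * (cmod (G $$ (i,a)))^2)" using e by simp
    also have "\<dots> = (\<Sum>i<n. lam i * q i)"
      unfolding q_def by (simp add: sum_distrib_left sum.swap[of _ "{..<m}"])
    finally show ?thesis .
  qed
  define X where "X = mat n (Suc m) (\<lambda>(i,a). if a < m then G $$ (i,a) else cnj (U $$ (kk,i)))"
  have X: "X \<in> carrier_mat n (Suc m)" unfolding X_def by auto
  have XX: "adj X * X = 1\<^sub>m (Suc m)"
  proof (rule eq_matI)
    fix a b assume a: "a < dim_row (1\<^sub>m (Suc m))" and b: "b < dim_col (1\<^sub>m (Suc m))"
    then have a': "a < Suc m" and b': "b < Suc m" by auto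
    have ex: "(adj X * X) $$ (a,b) = (\<Sum>i<n. cnj (X $$ (i,a)) * X $$ (i,b))"
      by (rule adjmul_index[OF X X a' b'])
    show "(adj X * X) $$ (a,b) = 1\<^sub>m (Suc m) $$ (a,b)"
    proof (cases "a < m")
      case am: True
      show ?thesis
      proof (cases "b < m")
        case bm: True
        have "(adj X * X) $$ (a,b) = (adj G * G) $$ (a,b)"
          unfolding ex adjmul_index[OF G G am bm] by (rule sum.cong, insert am bm, auto simp: X_def)
        then show ?thesis unfolding GG using am bm by simp
      next
        case False
        then have bm: "b = m" using b' by auto
        have "(adj X * X) $$ (a,b) = cnj (\<Sum>i<n. U $$ (kk,i) * G $$ (i,a))"
          unfolding ex cnj_sum by (rule sum.cong, insert am bm, auto simp: X_def)
        also have "(\<Sum>i<n. U $$ (kk,i) * G $$ (i,a)) = (U * G) $$ (kk,a)"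
          by (rule mul_index[OF U(1) G kk(1) am, symmetric])
        also have "\<dots> = 0" unfolding UG using ZCk[OF am] .
        finally show ?thesis using am bm by simp
      qed
    next
      case False
      then have am: "a = m" using a' by auto
      show ?thesis
      proof (cases "b < m")
        case bm: True
        have "(adj X * X) $$ (a,b) = (\<Sum>i<n. U $$ (kk,i) * G $$ (i,b))"
          unfolding ex by (rule sum.cong, insert am bm, auto simp: X_def)
        also have "\<dots> = (U * G) $$ (kk,b)"
          by (rule mul_index[OF U(1) G kk(1) bm, symmetric])
        also have "\<dots> = 0" unfolding UG using ZCk[OF bm] .
        finally show ?thesis using am bm by simp
      next
        case False
        then have bm: "b = m" using b' by auto
        have "(adj X * X) $$ (a,b) = (\<Sum>i<n. U $$ (kk,i) * cnj (U $$ (kk,i)))"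
          unfolding ex by (rule sum.cong, insert am bm, auto simp: X_def)
        also have "\<dots> = (U * adj U) $$ (kk,kk)" by (rule muladj_index[OF U(1) U(1) kk(1) kk(1), symmetric])
        also have "\<dots> = 1" unfolding UU' using kk by simp
        finally show ?thesis using am bm by simp
      qed
    qed
  qed (auto simp: X_def)
  have qb: "q i + (cmod (U $$ (kk,i)))^2 \<le> 1" if i: "i < n" for i
  proof -
    have "(\<Sum>a<Suc m. (cmod (X $$ (i,a)))^2) \<le> 1" by (rule rownorm_le1[OF X XX i])
    moreover have "(\<Sum>a<Suc m. (cmod (X $$ (i,a)))^2) = q i + (cmod (U $$ (kk,i)))^2"
      unfolding q_def using i by (simp add: X_def)
    ultimately show ?thesis by simp
  qed
  have "\<forall>j<p. 0 \<le> s j \<and> s j \<le> 1" unfolding s_def using rownorm_le1[OF C CC] by (auto intro: sum_nonneg)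
  moreover have "\<forall>j\<in>Jc. s j = 0" unfolding s_def using Czero by simp
  moreover have "(\<Sum>j<p. s j) = real m" unfolding s_def by (rule total_sumsq[OF C CC])
  moreover have "\<forall>i<n. 0 \<le> q i \<and> q i + (cmod (U $$ (kk,i)))^2 \<le> 1" using qb unfolding q_def by (auto intro: sum_nonneg)
  moreover have "\<forall>i\<in>Ic. q i = 0" unfolding q_def using Gzero by simp
  moreover have "(\<Sum>i<n. q i) = real m" unfolding q_def by (rule total_sumsq[OF G GG])
  ultimately show ?thesis using sumeq by blast
qed



lemma sum_if_sub: fixes h :: "nat \<Rightarrow> real"
  assumes "S \<subseteq> {..<p}"
  shows "(\<Sum>j<p. if j \<in> S then h j else 0) = (\<Sum>j\<in>S. h j)"
proof -
  have "(\<Sum>j<p. if j \<in> S then h j else 0) = (\<Sum>j\<in>{..<p} \<inter> S. h j)"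
    by (simp add: sum.inter_restrict)
  also have "{..<p} \<inter> S = S" using assms by auto
  finally show ?thesis .
qed

lemma frac_mu_up: fixes mu s :: "nat \<Rightarrow> real"
  assumes s: "\<forall>j<p. 0 \<le> s j \<and> s j \<le> 1" and sz: "\<forall>j. r \<le> j \<and> j < p \<longrightarrow> s j = 0"
    and ss: "(\<Sum>j<p. s j) = real (r - l0)" and lr: "l0 \<le> r" "r \<le> p"
    and mu: "\<forall>i j. i \<le> j \<and> j < p \<longrightarrow> mu j \<le> mu i"
  shows "(\<Sum>j\<in>{l0..<r}. mu j) \<le> (\<Sum>j<p. mu j * s j)"
proof (cases "l0 = r")
  case True
  then have "\<forall>j\<in>{..<p}. s j = 0" using ss s sum_nonneg_eq_0_iff[of "{..<p}" s] by auto
  then show ?thesis using True by simp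
next
  case False
  then have l0p: "l0 < p" using lr by auto
  define c where "c = mu l0"
  have "(\<Sum>j<p. if j \<in> {l0..<r} then mu j - c else 0) \<le> (\<Sum>j<p. (mu j - c) * s j)"
  proof (rule sum_mono)
    fix j assume "j \<in> {..<p}"
    then have j: "j < p" by auto
    show "(if j \<in> {l0..<r} then mu j - c else 0) \<le> (mu j - c) * s j"
    proof (cases "j < l0")
      case True
      then have "mu j \<ge> c" unfolding c_def using mu l0p by auto
      then show ?thesis using True s j by auto
    next
      case False
      then have "mu j \<le> c" unfolding c_def using mu j by auto
      moreover have "r \<le> j \<Longrightarrow> s j = 0" using sz j by auto
      moreover have "(1 - s j) * (mu j - c) \<le> 0" by (rule mult_nonneg_nonpos, insert s j \<open>mu j \<le> c\<close>, auto)
      ultimately show ?thesis using False s j by (auto simp: algebra_simps)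
    qed
  qed
  also have "(\<Sum>j<p. (mu j - c) * s j) = (\<Sum>j<p. mu j * s j) - c * real (r - l0)"
    unfolding ss[symmetric] by (simp add: algebra_simps sum_subtractf sum_distrib_left)
  also have "(\<Sum>j<p. if j \<in> {l0..<r} then mu j - c else 0) = (\<Sum>j\<in>{l0..<r}. mu j) - c * real (r - l0)"
    using lr by (subst sum_if_sub, auto simp: sum_subtractf)
  finally show ?thesis by simp
qed

lemma frac_mu_low: fixes mu s :: "nat \<Rightarrow> real"
  assumes s: "\<forall>j<p. 0 \<le> s j \<and> s j \<le> 1" and sz: "\<forall>j. j < l0 \<longrightarrow> s j = 0"
    and ss: "(\<Sum>j<p. s j) = real (r - l0)" and lr: "l0 \<le> r" "r \<le> p"
    and mu: "\<forall>i j. i \<le> j \<and> j < p \<longrightarrow> mu j \<le> mu i"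
  shows "(\<Sum>j<p. mu j * s j) \<le> (\<Sum>j\<in>{l0..<r}. mu j)"
proof (cases "l0 = r")
  case True
  then have "\<forall>j\<in>{..<p}. s j = 0" using ss s sum_nonneg_eq_0_iff[of "{..<p}" s] by auto
  then show ?thesis using True by simp
next
  case False
  then have rp: "r - 1 < p" "l0 \<le> r - 1" using lr by auto
  define c where "c = mu (r - 1)"
  have "(\<Sum>j<p. (mu j - c) * s j) \<le> (\<Sum>j<p. if j \<in> {l0..<r} then mu j - c else 0)"
  proof (rule sum_mono)
    fix j assume "j \<in> {..<p}"
    then have j: "j < p" by auto
    show "(mu j - c) * s j \<le> (if j \<in> {l0..<r} then mu j - c else 0)"
    proof (cases "j < r")
      case True
      then have "mu j \<ge> c" unfolding c_def using mu rp by auto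
      moreover have "j < l0 \<Longrightarrow> s j = 0" using sz by auto
      ultimately show ?thesis using True s j
        by (auto simp: mult_le_cancel_left1 intro: mult_left_le)
    next
      case False
      then have "mu j \<le> c" unfolding c_def using mu j by auto
      then show ?thesis using False s j by (auto simp: mult_le_0_iff)
    qed
  qed
  also have "(\<Sum>j<p. (mu j - c) * s j) = (\<Sum>j<p. mu j * s j) - c * real (r - l0)"
    unfolding ss[symmetric] by (simp add: algebra_simps sum_subtractf sum_distrib_left)
  also have "(\<Sum>j<p. if j \<in> {l0..<r} then mu j - c else 0) = (\<Sum>j\<in>{l0..<r}. mu j) - c * real (r - l0)"
    using lr by (subst sum_if_sub, auto simp: sum_subtractf)
  finally show ?thesis by simp
qed

lemma frac_lam_up: fixes lam q w :: "nat \<Rightarrow> real"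
  assumes q: "\<forall>i<n. 0 \<le> q i \<and> q i + w i \<le> 1" and qz: "\<forall>i. i < l0 \<longrightarrow> q i = 0"
    and qs: "(\<Sum>i<n. q i) = real (r - l0)" and lr: "l0 \<le> r" "r < n"
    and lam: "\<forall>i j. i \<le> j \<and> j < n \<longrightarrow> lam j \<le> lam i"
  shows "(\<Sum>i<n. lam i * q i) \<le> (\<Sum>i\<in>{l0..<r}. (lam i - lam r) * (1 - w i)) + real (r - l0) * lam r"
proof -
  define c where "c = lam r"
  have "(\<Sum>i<n. (lam i - c) * q i) \<le> (\<Sum>i<n. if i \<in> {l0..<r} then (lam i - c) * (1 - w i) else 0)"
  proof (rule sum_mono)
    fix i assume "i \<in> {..<n}"
    then have i: "i < n" by auto
    show "(lam i - c) * q i \<le> (if i \<in> {l0..<r} then (lam i - c) * (1 - w i) else 0)"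
    proof (cases "i < r")
      case True
      then have "lam i \<ge> c" unfolding c_def using lam lr by auto
      moreover have "i < l0 \<Longrightarrow> q i = 0" using qz by auto
      moreover have "q i \<le> 1 - w i" using q i by auto
      ultimately show ?thesis using True q i
        by (auto intro: mult_left_mono[of "q i" "1 - w i" "lam i - c"])
    next
      case False
      then have "lam i \<le> c" unfolding c_def using lam i by auto
      then show ?thesis using False q i by (auto simp: mult_le_0_iff)
    qed
  qed
  also have "(\<Sum>i<n. (lam i - c) * q i) = (\<Sum>i<n. lam i * q i) - c * real (r - l0)"
    unfolding qs[symmetric] by (simp add: algebra_simps sum_subtractf sum_distrib_left)
  also have "(\<Sum>i<n. if i \<in> {l0..<r} then (lam i - c) * (1 - w i) else 0) = (\<Sum>i\<in>{l0..<r}. (lam i - c) * (1 - w i))"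
    using lr by (subst sum_if_sub, auto)
  finally show ?thesis unfolding c_def by (simp add: algebra_simps)
qed

lemma frac_lam_low: fixes lam q w :: "nat \<Rightarrow> real"
  assumes q: "\<forall>i<n. 0 \<le> q i \<and> q i + w i \<le> 1" and qz: "\<forall>i. r < i \<and> i < n \<longrightarrow> q i = 0"
    and qs: "(\<Sum>i<n. q i) = real (r - l0)" and lr: "l0 \<le> r" "r < n"
    and lam: "\<forall>i j. i \<le> j \<and> j < n \<longrightarrow> lam j \<le> lam i"
  shows "(\<Sum>i\<in>{Suc l0..r}. (lam i - lam l0) * (1 - w i)) + real (r - l0) * lam l0 \<le> (\<Sum>i<n. lam i * q i)"
proof -
  define c where "c = lam l0"
  have "(\<Sum>i<n. if i \<in> {Suc l0..r} then (lam i - c) * (1 - w i) else 0) \<le> (\<Sum>i<n. (lam i - c) * q i)"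
  proof (rule sum_mono)
    fix i assume "i \<in> {..<n}"
    then have i: "i < n" by auto
    show "(if i \<in> {Suc l0..r} then (lam i - c) * (1 - w i) else 0) \<le> (lam i - c) * q i"
    proof (cases "i \<le> l0")
      case True
      then have "lam i \<ge> c" unfolding c_def using lam lr by auto
      then show ?thesis using True q i by auto
    next
      case False
      then have "lam i \<le> c" unfolding c_def using lam i by auto
      moreover have "r < i \<Longrightarrow> q i = 0" using qz i by auto
      moreover have "q i \<le> 1 - w i" using q i by auto
      ultimately show ?thesis using False q i
        by (auto intro: mult_left_mono_neg[of "q i" "1 - w i" "lam i - c"])
    qed
  qed
  also have "(\<Sum>i<n. (lam i - c) * q i) = (\<Sum>i<n. lam i * q i) - c * real (r - l0)"
    unfolding qs[symmetric] by (simp add: algebra_simps sum_subtractf sum_distrib_left)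
  also have "(\<Sum>i<n. if i \<in> {Suc l0..r} then (lam i - c) * (1 - w i) else 0) = (\<Sum>i\<in>{Suc l0..r}. (lam i - c) * (1 - w i))"
    using lr by (subst sum_if_sub, auto)
  finally show ?thesis unfolding c_def by (simp add: algebra_simps)
qed



lemma Z_exists:
  fixes A :: "complex mat"
  assumes A: "A \<in> carrier_mat n n" "adj A = A" and kk: "kk < n"
    and cp: "char_poly (mat_delete A kk kk) = (\<Prod>e\<leftarrow>es. [:-e,1:])" "length es = n - 1"
  shows "\<exists>Z \<in> carrier_mat n (n-1). adj Z * Z = 1\<^sub>m (n-1) \<and> adj Z * A * Z = diagc (n-1) (\<lambda>j. es ! j)
     \<and> (\<forall>j<n-1. Z $$ (kk,j) = 0)"
proof -
  obtain n' where n: "n = Suc n'" using kk by (cases n, auto)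
  define B where "B = mat_delete A kk kk"
  have B: "B \<in> carrier_mat n' n'" unfolding B_def using mat_delete_carrier[OF A(1)] n by simp
  have Bi: "B $$ (a,b) = A $$ (insert_index kk a, insert_index kk b)" if "a < n'" "b < n'" for a b
    unfolding B_def using mat_delete_index[of A n' kk kk a b] A(1) n kk that by simp
  have ins: "insert_index kk j < n" "insert_index kk j \<noteq> kk" if "j < n'" for j
    using that n unfolding insert_index_def by auto
  have insinj: "insert_index kk a = insert_index kk b \<longleftrightarrow> a = b" for a b
    unfolding insert_index_def by auto
  have hA: "\<forall>i<n. \<forall>j<n. A $$ (i,j) = cnj (A $$ (j,i))" using A(2) unfolding hermitian_adj[OF A(1)] .
  have adjB: "adj B = B" unfolding hermitian_adj[OF B]
  proof (intro allI impI)
    fix a b assume ab: "a < n'" "b < n'"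
    show "B $$ (a,b) = cnj (B $$ (b,a))" unfolding Bi[OF ab] Bi[OF ab(2,1)]
      using hA[rule_format, OF ins(1)[OF ab(1)] ins(1)[OF ab(2)]] .
  qed
  from spectral[OF B adjB cp(1)[folded B_def]] cp(2) n obtain V where
    V: "V \<in> carrier_mat n' n'" "adj V * V = 1\<^sub>m n'" "adj V * B * V = diagc n' (\<lambda>i. es ! i)" by auto
  define E where "E = mat n n' (\<lambda>(i,j). if i = insert_index kk j then 1 else (0::complex))"
  have E: "E \<in> carrier_mat n n'" unfolding E_def by auto
  have dims[simp]: "dim_row E = n" "dim_col E = n'" "dim_row V = n'" "dim_col V = n'" "dim_row A = n" "dim_col A = n"
    "dim_row B = n'" "dim_col B = n'"
    using E V A B by auto
  have EE: "adj E * E = 1\<^sub>m n'"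
  proof (rule eq_matI)
    fix a b assume "a < dim_row (1\<^sub>m n')" "b < dim_col (1\<^sub>m n')"
    then have ab: "a < n'" "b < n'" by auto
    have "(adj E * E) $$ (a,b) = (\<Sum>i<n. cnj (E $$ (i,a)) * E $$ (i,b))" by (rule adjmul_index[OF E E ab])
    also have "\<dots> = (\<Sum>i<n. if i = insert_index kk a then (if a = b then 1 else 0) else 0)"
      by (rule sum.cong, insert ab, auto simp: E_def insinj)
    also have "\<dots> = (if a = b then 1 else 0)" using ins(1)[OF ab(1)] by simp
    finally show "(adj E * E) $$ (a,b) = 1\<^sub>m n' $$ (a,b)" using ab by simp
  qed auto
  have EAE: "adj E * (A * E) = B"
  proof (rule eq_matI)
    fix a b assume "a < dim_row B" "b < dim_col B"
    then have ab: "a < n'" "b < n'" by auto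
    have AE: "A * E \<in> carrier_mat n n'" using A(1) E by simp
    have AEi: "(A * E) $$ (t,b) = A $$ (t, insert_index kk b)" if t: "t < n" for t
    proof -
      have "(A * E) $$ (t,b) = (\<Sum>i<n. A $$ (t,i) * E $$ (i,b))" by (rule mul_index[OF A(1) E t ab(2)])
      also have "\<dots> = (\<Sum>i<n. if i = insert_index kk b then A $$ (t, insert_index kk b) else 0)"
        by (rule sum.cong, insert ab, auto simp: E_def)
      also have "\<dots> = A $$ (t, insert_index kk b)" using ins(1)[OF ab(2)] by simp
      finally show ?thesis .
    qed
    have "(adj E * (A * E)) $$ (a,b) = (\<Sum>i<n. cnj (E $$ (i,a)) * (A * E) $$ (i,b))" by (rule adjmul_index[OF E AE ab])
    also have "\<dots> = (\<Sum>i<n. cnj (E $$ (i,a)) * A $$ (i, insert_index kk b))"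
      by (rule sum.cong, simp_all add: AEi)
    also have "\<dots> = (\<Sum>i<n. if i = insert_index kk a then A $$ (insert_index kk a, insert_index kk b) else 0)"
      by (rule sum.cong, insert ab, auto simp: E_def)
    also have "\<dots> = B $$ (a,b)" using ins(1)[OF ab(1)] Bi[OF ab] by simp
    finally show "(adj E * (A * E)) $$ (a,b) = B $$ (a,b)" .
  qed auto
  define Z where "Z = E * V"
  have Z: "Z \<in> carrier_mat n n'" unfolding Z_def using E V by simp
  have adjZ: "adj Z = adj V * adj E" unfolding Z_def by (rule adj_mult[OF E V(1)])
  have "adj Z * Z = adj V * (adj E * (E * V))" unfolding adjZ unfolding Z_def by (simp add: assoc_auto)
  also have "\<dots> = 1\<^sub>m n'" by (simp add: cancel_assoc[OF EE] V(2))
  finally have ZZ: "adj Z * Z = 1\<^sub>m n'" .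
  have "adj Z * A * Z = adj V * (adj E * (A * (E * V)))" unfolding adjZ unfolding Z_def by (simp add: assoc_auto)
  also have "adj E * (A * (E * V)) = B * V" unfolding EAE[symmetric] by (simp add: assoc_auto)
  also have "adj V * (B * V) = diagc n' (\<lambda>i. es ! i)" unfolding V(3)[symmetric] by (simp add: assoc_auto)
  finally have ZAZ: "adj Z * A * Z = diagc n' (\<lambda>i. es ! i)" .
  have Zk: "Z $$ (kk,j) = 0" if j: "j < n'" for j
  proof -
    have "Z $$ (kk,j) = (\<Sum>t<n'. E $$ (kk,t) * V $$ (t,j))" unfolding Z_def by (rule mul_index[OF E V(1) kk j])
    also have "\<dots> = 0" by (rule sum.neutral, insert ins(2) kk, auto simp: E_def insert_index_def)
    finally show ?thesis .
  qed
  show ?thesis using Z ZZ ZAZ Zk n by auto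
qed



lemma per_k:
  fixes lam0 mu0 :: "nat \<Rightarrow> real"
  assumes U: "U \<in> carrier_mat n n" "adj U * U = 1\<^sub>m n" "adj U * A * U = diagc n (\<lambda>i. of_real (lam0 i))"
  and A: "A \<in> carrier_mat n n"
  and Z: "Z \<in> carrier_mat n (n-1)" "adj Z * Z = 1\<^sub>m (n-1)" "adj Z * A * Z = diagc (n-1) (\<lambda>j. of_real (mu0 j))"
  and kk: "kk < n" "\<forall>j<n-1. Z $$ (kk,j) = 0"
  and lam: "\<forall>i j. i \<le> j \<and> j < n \<longrightarrow> lam0 j \<le> lam0 i"
  and mu: "\<forall>i j. i \<le> j \<and> j < n-1 \<longrightarrow> mu0 j \<le> mu0 i"
  and lr: "1 \<le> l" "l \<le> r" "r \<le> n - 1"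
  shows "(\<Sum>j\<in>{l-1..<r}. mu0 j) \<le> (\<Sum>i\<in>{l-1..<r}. (lam0 i - lam0 r) * (1 - (cmod (U $$ (kk,i)))^2)) + real (r - (l-1)) * lam0 r"
    and "(\<Sum>i\<in>{Suc (l-1)..r}. (lam0 i - lam0 (l-1)) * (1 - (cmod (U $$ (kk,i)))^2)) + real (r - (l-1)) * lam0 (l-1) \<le> (\<Sum>j\<in>{l-1..<r}. mu0 j)"
proof -
  let ?w = "\<lambda>i. (cmod (U $$ (kk,i)))^2"
  have c1: "card {r..<n-1} + card {..<l-1} + (r - (l-1)) \<le> n - 1" using lr by simp
  have J1: "{r..<n-1} \<subseteq> {..<n-1}" and I1: "{..<l-1} \<subseteq> {..<n}" using lr by auto
  note ex1 = core[OF U A Z kk J1 I1 c1]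
  from ex1 obtain s q where
    sq: "\<forall>j<n-1. 0 \<le> s j \<and> s j \<le> 1" "\<forall>j\<in>{r..<n-1}. s j = 0" "(\<Sum>j<n-1. s j) = real (r - (l-1))"
      "\<forall>i<n. 0 \<le> q i \<and> q i + ?w i \<le> 1" "\<forall>i\<in>{..<l-1}. q i = 0" "(\<Sum>i<n. q i) = real (r - (l-1))"
      "(\<Sum>j<n-1. mu0 j * s j) = (\<Sum>i<n. lam0 i * q i)" by blast
  have "(\<Sum>j\<in>{l-1..<r}. mu0 j) \<le> (\<Sum>j<n-1. mu0 j * s j)"
    by (rule frac_mu_up[OF sq(1) _ sq(3) _ _ mu], insert sq(2) lr, auto)
  also have "\<dots> = (\<Sum>i<n. lam0 i * q i)" by (rule sq(7))
  also have "\<dots> \<le> (\<Sum>i\<in>{l-1..<r}. (lam0 i - lam0 r) * (1 - ?w i)) + real (r - (l-1)) * lam0 r"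
    by (rule frac_lam_up[OF sq(4) _ sq(6) _ _ lam], insert sq(5) lr, auto)
  finally show "(\<Sum>j\<in>{l-1..<r}. mu0 j) \<le> (\<Sum>i\<in>{l-1..<r}. (lam0 i - lam0 r) * (1 - ?w i)) + real (r - (l-1)) * lam0 r" .
  have c2: "card {..<l-1} + card {Suc r..<n} + (r - (l-1)) \<le> n - 1" using lr by simp
  have J2: "{..<l-1} \<subseteq> {..<n-1}" and I2: "{Suc r..<n} \<subseteq> {..<n}" using lr by auto
  note ex2 = core[OF U A Z kk J2 I2 c2]
  from ex2 obtain s q where
    sq: "\<forall>j<n-1. 0 \<le> s j \<and> s j \<le> 1" "\<forall>j\<in>{..<l-1}. s j = 0" "(\<Sum>j<n-1. s j) = real (r - (l-1))"
      "\<forall>i<n. 0 \<le> q i \<and> q i + ?w i \<le> 1" "\<forall>i\<in>{Suc r..<n}. q i = 0" "(\<Sum>i<n. q i) = real (r - (l-1))"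
      "(\<Sum>j<n-1. mu0 j * s j) = (\<Sum>i<n. lam0 i * q i)" by blast
  have "(\<Sum>i\<in>{Suc (l-1)..r}. (lam0 i - lam0 (l-1)) * (1 - ?w i)) + real (r - (l-1)) * lam0 (l-1) \<le> (\<Sum>i<n. lam0 i * q i)"
    by (rule frac_lam_low[OF sq(4) _ sq(6) _ _ lam], insert sq(5) lr, auto)
  also have "\<dots> = (\<Sum>j<n-1. mu0 j * s j)" by (rule sq(7)[symmetric])
  also have "\<dots> \<le> (\<Sum>j\<in>{l-1..<r}. mu0 j)"
    by (rule frac_mu_low[OF sq(1) _ sq(3) _ _ mu], insert sq(2) lr, auto)
  finally show "(\<Sum>i\<in>{Suc (l-1)..r}. (lam0 i - lam0 (l-1)) * (1 - ?w i)) + real (r - (l-1)) * lam0 (l-1) \<le> (\<Sum>j\<in>{l-1..<r}. mu0 j)" .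
qed

lemma agg_eq:
  fixes lam0 :: "nat \<Rightarrow> real" and w :: "nat \<Rightarrow> nat \<Rightarrow> real"
  assumes S: "finite S" "card S = m" and w: "\<forall>i\<in>S. (\<Sum>kk<n. w kk i) = 1" and n: "n \<ge> 1"
  shows "(\<Sum>kk<n. (\<Sum>i\<in>S. (lam0 i - c) * (1 - w kk i)) + real m * c) = real (n - 1) * (\<Sum>i\<in>S. lam0 i) + real m * c"
proof -
  have "(\<Sum>kk<n. (\<Sum>i\<in>S. (lam0 i - c) * (1 - w kk i)) + real m * c)
      = (\<Sum>i\<in>S. \<Sum>kk<n. (lam0 i - c) * (1 - w kk i)) + real n * real m * c"
    by (simp add: sum.distrib sum.swap[of _ "{..<n}"])
  also have "(\<Sum>i\<in>S. \<Sum>kk<n. (lam0 i - c) * (1 - w kk i)) = (\<Sum>i\<in>S. (lam0 i - c) * (real n - 1))"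
  proof (rule sum.cong)
    fix i assume i: "i \<in> S"
    have "(\<Sum>kk<n. (lam0 i - c) * (1 - w kk i)) = (lam0 i - c) * (real n - (\<Sum>kk<n. w kk i))"
      by (simp add: sum_distrib_left[symmetric] sum_subtractf)
    then show "(\<Sum>kk<n. (lam0 i - c) * (1 - w kk i)) = (lam0 i - c) * (real n - 1)" using w i by simp
  qed simp
  also have "(\<Sum>i\<in>S. (lam0 i - c) * (real n - 1)) = (\<Sum>i\<in>S. (lam0 i - c)) * (real n - 1)"
    by (rule sum_distrib_right[symmetric])
  also have "(\<Sum>i\<in>S. (lam0 i - c)) = (\<Sum>i\<in>S. lam0 i) - real m * c"
    using S by (simp add: sum_subtractf)
  finally show ?thesis using n by (simp add: of_nat_diff algebra_simps)
qed



lemma reidx: fixes f :: "nat \<Rightarrow> 'a::comm_monoid_add"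
  assumes "1 \<le> l"
  shows "(\<Sum>j=l..r. f j) = (\<Sum>j\<in>{l-1..<r}. f (Suc j))"
proof -
  have e: "{l..r} = {Suc (l-1)..<Suc r}" using assms by auto
  show ?thesis unfolding e by (rule sum.shift_bounds_Suc_ivl)
qed

lemma prod_shift_list: fixes f :: "nat \<Rightarrow> real"
  shows "(\<Prod>i=1..n. [:- complex_of_real (f i), 1:]) = (\<Prod>e\<leftarrow>map (\<lambda>i. complex_of_real (f (Suc i))) [0..<n]. [:-e,1:])"
proof -
  have "(\<Prod>e\<leftarrow>map (\<lambda>i. complex_of_real (f (Suc i))) [0..<n]. [:-e,1:]) = (\<Prod>i\<leftarrow>[0..<n]. [:- complex_of_real (f (Suc i)), 1:])"
    by (simp add: o_def)
  also have "\<dots> = (\<Prod>i\<in>{0..<n}. [:- complex_of_real (f (Suc i)), 1:])"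
    using prod.distinct_set_conv_list[of "[0..<n]" "\<lambda>i. [:- complex_of_real (f (Suc i)), 1:]"] by simp
  also have "\<dots> = (\<Prod>i=1..n. [:- complex_of_real (f i), 1:])"
  proof -
    have e: "{1..n} = {Suc 0..<Suc n}" by auto
    show ?thesis unfolding e by (rule prod.shift_bounds_Suc_ivl[symmetric])
  qed
  finally show ?thesis ..
qed

lemma diagc_cong: "(\<And>i. i < n \<Longrightarrow> f i = g i) \<Longrightarrow> diagc n f = diagc n g"
  by (rule eq_matI, auto)

theorem theorem3p5:
  fixes n :: nat and A :: "complex mat" and lam :: "nat \<Rightarrow> real"
    and mu :: "nat \<Rightarrow> nat \<Rightarrow> real"
  assumes "n \<ge> 2"
    and "hermitian_mat n A"
    and "sorted_eigenvalues n A lam"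
    and "\<And>k. 1 \<le> k \<Longrightarrow> k \<le> n \<Longrightarrow>
           sorted_eigenvalues (n - 1) (mat_delete A (k - 1) (k - 1)) (mu k)"
    and "1 \<le> l" and "l \<le> r" and "r \<le> n - 1"
  shows "real (r - l + 1) * lam l + real (n - 1) * (\<Sum>j=l..r. lam (j + 1))
           \<le> (\<Sum>k=1..n. \<Sum>j=l..r. mu k j)
       \<and> (\<Sum>k=1..n. \<Sum>j=l..r. mu k j)
           \<le> real (n - 1) * (\<Sum>j=l..r. lam j) + real (r - l + 1) * lam (r + 1)"
proof -
  note lr = assms(5-7)
  have hh: "A \<in> carrier_mat n n \<and> (\<forall>i<n. \<forall>j<n. A $$ (i,j) = cnj (A $$ (j,i)))"
    using assms(2) unfolding hermitian_mat_def .
  note A = conjunct1[OF hh] and hA = conjunct2[OF hh]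
  have adjA: "adj A = A" unfolding hermitian_adj[OF A] by (rule hA)
  define lam0 where "lam0 i = lam (Suc i)" for i
  have lams: "\<forall>i j. i \<le> j \<and> j < n \<longrightarrow> lam0 j \<le> lam0 i"
    using assms(3) unfolding sorted_eigenvalues_def lam0_def by auto
  have cpA: "char_poly A = (\<Prod>e\<leftarrow>map (\<lambda>i. complex_of_real (lam0 i)) [0..<n]. [:-e,1:])"
    using assms(3) unfolding sorted_eigenvalues_def prod_shift_list lam0_def by simp
  from spectral[OF A adjA cpA] obtain U where
    U0: "U \<in> carrier_mat n n" "adj U * U = 1\<^sub>m n" "adj U * A * U = diagc n (\<lambda>i. map (\<lambda>i. complex_of_real (lam0 i)) [0..<n] ! i)"
    by auto
  have U3: "adj U * A * U = diagc n (\<lambda>i. complex_of_real (lam0 i))"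
    unfolding U0(3) by (rule diagc_cong, simp)
  define mu0 where "mu0 kk j = mu (Suc kk) (Suc j)" for kk j
  define w where "w kk i = (cmod (U $$ (kk,i)))^2" for kk i
  have wsum: "\<forall>i\<in>S. (\<Sum>kk<n. w kk i) = 1" if "S \<subseteq> {..<n}" for S
    using col_sumsq[OF U0(1) U0(2)] that unfolding w_def by auto
  have Zk: "\<exists>Z \<in> carrier_mat n (n-1). adj Z * Z = 1\<^sub>m (n-1) \<and> adj Z * A * Z = diagc (n-1) (\<lambda>j. complex_of_real (mu0 kk j))
     \<and> (\<forall>j<n-1. Z $$ (kk,j) = 0)" and mus: "\<forall>i j. i \<le> j \<and> j < n-1 \<longrightarrow> mu0 kk j \<le> mu0 kk i"
    if kk: "kk < n" for kk
  proof -
    have se: "sorted_eigenvalues (n - 1) (mat_delete A kk kk) (mu (Suc kk))" using assms(4)[of "Suc kk"] kk by simp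
    have cp: "char_poly (mat_delete A kk kk) = (\<Prod>e\<leftarrow>map (\<lambda>i. complex_of_real (mu0 kk i)) [0..<n-1]. [:-e,1:])"
      using se unfolding sorted_eigenvalues_def prod_shift_list mu0_def by simp
    from Z_exists[OF A adjA kk cp] obtain Z where
      Z: "Z \<in> carrier_mat n (n-1)" "adj Z * Z = 1\<^sub>m (n-1)"
        "adj Z * A * Z = diagc (n-1) (\<lambda>j. map (\<lambda>i. complex_of_real (mu0 kk i)) [0..<n-1] ! j)"
        "\<forall>j<n-1. Z $$ (kk,j) = 0" by auto
    have "adj Z * A * Z = diagc (n-1) (\<lambda>j. complex_of_real (mu0 kk j))"
      unfolding Z(3) by (rule diagc_cong, simp)
    then show "\<exists>Z \<in> carrier_mat n (n-1). adj Z * Z = 1\<^sub>m (n-1) \<and> adj Z * A * Z = diagc (n-1) (\<lambda>j. complex_of_real (mu0 kk j))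
     \<and> (\<forall>j<n-1. Z $$ (kk,j) = 0)" using Z by blast
    show "\<forall>i j. i \<le> j \<and> j < n-1 \<longrightarrow> mu0 kk j \<le> mu0 kk i"
      using se unfolding sorted_eigenvalues_def mu0_def by auto
  qed
  have up: "(\<Sum>j\<in>{l-1..<r}. mu0 kk j) \<le> (\<Sum>i\<in>{l-1..<r}. (lam0 i - lam0 r) * (1 - w kk i)) + real (r - (l-1)) * lam0 r"
    and low: "(\<Sum>i\<in>{Suc (l-1)..r}. (lam0 i - lam0 (l-1)) * (1 - w kk i)) + real (r - (l-1)) * lam0 (l-1) \<le> (\<Sum>j\<in>{l-1..<r}. mu0 kk j)"
    if kk: "kk < n" for kk
  proof -
    from Zk[OF kk] obtain Z where Z: "Z \<in> carrier_mat n (n-1)" "adj Z * Z = 1\<^sub>m (n-1)"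
      "adj Z * A * Z = diagc (n-1) (\<lambda>j. complex_of_real (mu0 kk j))" "\<forall>j<n-1. Z $$ (kk,j) = 0" by blast
    note pk = per_k[OF U0(1,2) U3 A Z(1,2,3) kk Z(4) lams mus[OF kk] lr]
    show "(\<Sum>j\<in>{l-1..<r}. mu0 kk j) \<le> (\<Sum>i\<in>{l-1..<r}. (lam0 i - lam0 r) * (1 - w kk i)) + real (r - (l-1)) * lam0 r"
      using pk(1) unfolding w_def .
    show "(\<Sum>i\<in>{Suc (l-1)..r}. (lam0 i - lam0 (l-1)) * (1 - w kk i)) + real (r - (l-1)) * lam0 (l-1) \<le> (\<Sum>j\<in>{l-1..<r}. mu0 kk j)"
      using pk(2) unfolding w_def .
  qed
  have n1: "n \<ge> 1" using assms(1) by simp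
  have tot: "(\<Sum>k=1..n. \<Sum>j=l..r. mu k j) = (\<Sum>kk<n. \<Sum>j\<in>{l-1..<r}. mu0 kk j)"
  proof -
    have "(\<Sum>k=1..n. \<Sum>j=l..r. mu k j) = (\<Sum>kk\<in>{0..<n}. \<Sum>j=l..r. mu (Suc kk) j)"
      using reidx[of 1 "\<lambda>k. \<Sum>j=l..r. mu k j" n] by simp
    also have "\<dots> = (\<Sum>kk<n. \<Sum>j\<in>{l-1..<r}. mu0 kk j)"
      unfolding mu0_def lessThan_atLeast0 by (simp add: reidx[OF lr(1)])
    finally show ?thesis .
  qed
  have m: "r - l + 1 = r - (l-1)" using lr by simp
  have upper: "(\<Sum>k=1..n. \<Sum>j=l..r. mu k j) \<le> real (n - 1) * (\<Sum>j=l..r. lam j) + real (r - l + 1) * lam (r + 1)"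
  proof -
    have "(\<Sum>kk<n. \<Sum>j\<in>{l-1..<r}. mu0 kk j) \<le> (\<Sum>kk<n. (\<Sum>i\<in>{l-1..<r}. (lam0 i - lam0 r) * (1 - w kk i)) + real (r - (l-1)) * lam0 r)"
      by (rule sum_mono, rule up, simp)
    also have "\<dots> = real (n - 1) * (\<Sum>i\<in>{l-1..<r}. lam0 i) + real (r - (l-1)) * lam0 r"
      by (rule agg_eq[OF _ _ wsum n1], insert lr, auto)
    also have "(\<Sum>i\<in>{l-1..<r}. lam0 i) = (\<Sum>j=l..r. lam j)" unfolding lam0_def by (simp add: reidx[OF lr(1)])
    finally show ?thesis unfolding tot m lam0_def by simp
  qed
  have lower: "real (r - l + 1) * lam l + real (n - 1) * (\<Sum>j=l..r. lam (j + 1)) \<le> (\<Sum>k=1..n. \<Sum>j=l..r. mu k j)"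
  proof -
    have "real (n - 1) * (\<Sum>i\<in>{Suc (l-1)..r}. lam0 i) + real (r - (l-1)) * lam0 (l-1)
        = (\<Sum>kk<n. (\<Sum>i\<in>{Suc (l-1)..r}. (lam0 i - lam0 (l-1)) * (1 - w kk i)) + real (r - (l-1)) * lam0 (l-1))"
      by (rule agg_eq[OF _ _ wsum n1, symmetric], insert lr, auto)
    also have "\<dots> \<le> (\<Sum>kk<n. \<Sum>j\<in>{l-1..<r}. mu0 kk j)"
      by (rule sum_mono, rule low, simp)
    finally have "real (n - 1) * (\<Sum>i\<in>{Suc (l-1)..r}. lam0 i) + real (r - (l-1)) * lam0 (l-1) \<le> (\<Sum>kk<n. \<Sum>j\<in>{l-1..<r}. mu0 kk j)" .
    moreover have "Suc (l-1) = l" "Suc (l - 1) = l" using lr by auto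
    ultimately show ?thesis unfolding tot m lam0_def by (simp add: algebra_simps)
  qed
  show ?thesis using upper lower by blast
qed


end
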